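(* Let $G$ be a connected graph and $k \ge 1$ an integer. For all $\Pi_1, \Pi_2 \in \mathrm{Part}(G,k)$ there is a sequence of at most $6(k-1)$ recombination moves (each intermediate partition lying in $\mathrm{Part}(G,k)$) that transforms $\Pi_1$ into $\Pi_2$. In particular, the configuration space $\mathcal{R}_\infty(G,k)$ is connected.
   Context: For a graph $G$ and positive integer $k$, a connected $k$-partition of $G$ is a partition of $V(G)$ into $k$ disjoint nonempty sets (districts) each inducing a connected subgraph; $\mathrm{Part}(G,k)$ is the set of these. Two distinct connected $k$-partitions $\{V_1,\dots,V_k\}$ and $\{W_1,\dots,W_k\}$ are related by a recombination move if there are indices $i,j$ and a permutation $\pi$ of $\{1,\dots,k\}$ with $V_i \cup V_j = W_{\pi(i)} \cup W_{\pi(j)}$ and $V_\ell = W_{\pi(\ell)}$ for all $\ell \notin \{i,j\}$. $\mathcal{R}_\infty(G,k)$ is the graph on $\mathrm{Part}(G,k)$ whose edges are the recombination moves. *)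

theory Defs
  imports Main
begin

definition graph :: "'a set \<Rightarrow> ('a \<Rightarrow> 'a \<Rightarrow> bool) \<Rightarrow> bool" where
  "graph V E \<longleftrightarrow> finite V \<and> (\<forall>x y. E x y \<longrightarrow> x \<in> V \<and> y \<in> V)
     \<and> (\<forall>x y. E x y \<longrightarrow> E y x) \<and> (\<forall>x. \<not> E x x)"

definition induces_connected :: "('a \<Rightarrow> 'a \<Rightarrow> bool) \<Rightarrow> 'a set \<Rightarrow> bool" where
  "induces_connected E S \<longleftrightarrow> S \<noteq> {} \<and>
     (\<forall>x\<in>S. \<forall>y\<in>S. (\<lambda>a b. E a b \<and> a \<in> S \<and> b \<in> S)\<^sup>*\<^sup>* x y)"

definition connected_graph :: "'a set \<Rightarrow> ('a \<Rightarrow> 'a \<Rightarrow> bool) \<Rightarrow> bool" where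
  "connected_graph V E \<longleftrightarrow> graph V E \<and> induces_connected E V"

definition Part :: "'a set \<Rightarrow> ('a \<Rightarrow> 'a \<Rightarrow> bool) \<Rightarrow> nat \<Rightarrow> 'a set set set" where
  "Part V E k = {P. \<Union>P = V \<and> card P = k \<and> finite P
     \<and> (\<forall>A\<in>P. \<forall>B\<in>P. A \<noteq> B \<longrightarrow> A \<inter> B = {})
     \<and> (\<forall>A\<in>P. A \<noteq> {} \<and> induces_connected E A)}"

definition recom_move :: "'a set set \<Rightarrow> 'a set set \<Rightarrow> bool" where
  "recom_move P Q \<longleftrightarrow> P \<noteq> Q \<and>
     (\<exists>A B C D. A \<in> P \<and> B \<in> P \<and> A \<noteq> B \<and> C \<in> Q \<and> D \<in> Q \<and> C \<noteq> D \<and>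
        A \<union> B = C \<union> D \<and> P - {A, B} = Q - {C, D})"

definition R_inf :: "'a set \<Rightarrow> ('a \<Rightarrow> 'a \<Rightarrow> bool) \<Rightarrow> nat \<Rightarrow> 'a set set \<Rightarrow> 'a set set \<Rightarrow> bool" where
  "R_inf V E k P Q \<longleftrightarrow> P \<in> Part V E k \<and> Q \<in> Part V E k \<and> recom_move P Q"

definition R_inf_connected :: "'a set \<Rightarrow> ('a \<Rightarrow> 'a \<Rightarrow> bool) \<Rightarrow> nat \<Rightarrow> bool" where
  "R_inf_connected V E k \<longleftrightarrow> (\<forall>P\<in>Part V E k. \<forall>Q\<in>Part V E k. (R_inf V E k)\<^sup>*\<^sup>* P Q)"

end

theory Submission
  imports Defs
begin

definition walkin :: "('a \<Rightarrow> 'a \<Rightarrow> bool) \<Rightarrow> 'a set \<Rightarrow> 'a \<Rightarrow> 'a \<Rightarrow> bool" where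
  "walkin E S = (\<lambda>a b. E a b \<and> a \<in> S \<and> b \<in> S)\<^sup>*\<^sup>*"

lemma ic_def2: "induces_connected E S \<longleftrightarrow> S \<noteq> {} \<and> (\<forall>x\<in>S. \<forall>y\<in>S. walkin E S x y)"
  unfolding induces_connected_def walkin_def by simp

lemma walkin_refl[simp]: "walkin E S x x"
  unfolding walkin_def by simp

lemma walkin_step: "walkin E S x y \<Longrightarrow> E y z \<Longrightarrow> y \<in> S \<Longrightarrow> z \<in> S \<Longrightarrow> walkin E S x z"
  unfolding walkin_def by (simp add: rtranclp.rtrancl_into_rtrancl)

lemma walkin_step_left: "E x y \<Longrightarrow> x \<in> S \<Longrightarrow> y \<in> S \<Longrightarrow> walkin E S y z \<Longrightarrow> walkin E S x z"
  unfolding walkin_def by (simp add: converse_rtranclp_into_rtranclp)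

lemma walkin_trans: "walkin E S x y \<Longrightarrow> walkin E S y z \<Longrightarrow> walkin E S x z"
  unfolding walkin_def by simp

lemma walkin_mono: "walkin E S x y \<Longrightarrow> S \<subseteq> T \<Longrightarrow> walkin E T x y"
  unfolding walkin_def
proof (induction rule: rtranclp_induct)
  case base then show ?case by simp
next
  case (step y z) then show ?case by (simp add: rtranclp.rtrancl_into_rtrancl subset_iff)
qed

lemma walkin_ends: "walkin E S x y \<Longrightarrow> x = y \<or> (x \<in> S \<and> y \<in> S)"
  unfolding walkin_def by (induction rule: rtranclp_induct) auto

lemma walkin_sym:
  assumes sym: "\<forall>x y. E x y \<longrightarrow> E y x" and w: "walkin E S x y"
  shows "walkin E S y x"
  using w unfolding walkin_def
proof (induction rule: rtranclp_induct)
  case base then show ?case by simp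
next
  case (step y z)
  then have "E z y" using sym by blast
  then show ?case using step by (metis (mono_tags, lifting) converse_rtranclp_into_rtranclp)
qed

lemma walkin_exit:
  assumes "walkin E S x y" "x \<in> T"
  shows "walkin E (S \<inter> T) x y \<or> (\<exists>u z. u \<in> T \<and> u \<in> S \<and> z \<in> S \<and> z \<notin> T \<and> E u z \<and> walkin E (S \<inter> T) x u)"
  using assms(1) unfolding walkin_def
proof (induction rule: rtranclp_induct)
  case base then show ?case by simp
next
  case (step y z)
  show ?case
  proof (cases "(\<lambda>a b. E a b \<and> a \<in> S \<inter> T \<and> b \<in> S \<inter> T)\<^sup>*\<^sup>* x y")
    case True
    have yT: "y \<in> T" using walkin_ends[of E "S \<inter> T" x y] True assms(2) unfolding walkin_def by auto
    show ?thesis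
    proof (cases "z \<in> T")
      case True
      then have "(\<lambda>a b. E a b \<and> a \<in> S \<inter> T \<and> b \<in> S \<inter> T)\<^sup>*\<^sup>* x z"
        using \<open>(\<lambda>a b. E a b \<and> a \<in> S \<inter> T \<and> b \<in> S \<inter> T)\<^sup>*\<^sup>* x y\<close> step(2) yT
        by (simp add: rtranclp.rtrancl_into_rtrancl)
      then show ?thesis by simp
    next
      case False
      then show ?thesis using True yT step(2) by blast
    qed
  next
    case False
    then show ?thesis using step(3) by simp
  qed
qed

lemma walkin_exit2:
  assumes "walkin E S x y" "x \<in> T" "y \<notin> T"
  shows "\<exists>u z. u \<in> T \<and> u \<in> S \<and> z \<in> S \<and> z \<notin> T \<and> E u z \<and> walkin E (S \<inter> T) x u"
proof -
  have "\<not> walkin E (S \<inter> T) x y"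
    using walkin_ends[of E "S \<inter> T" x y] assms by auto
  then show ?thesis using walkin_exit[OF assms(1,2)] by blast
qed

lemma ic_center:
  assumes sym: "\<forall>x y. E x y \<longrightarrow> E y x" and "c \<in> S" and "\<forall>z\<in>S. walkin E S c z"
  shows "induces_connected E S"
  unfolding ic_def2
proof (intro conjI ballI)
  show "S \<noteq> {}" using assms by auto
  fix x y assume "x \<in> S" "y \<in> S"
  then have "walkin E S x c" "walkin E S c y" using assms(3) walkin_sym[OF sym] by auto
  then show "walkin E S x y" by (rule walkin_trans)
qed

lemma ic_union_edge:
  assumes sym: "\<forall>x y. E x y \<longrightarrow> E y x" and "induces_connected E X" "induces_connected E Y"
    "x \<in> X" "y \<in> Y" "E x y"
  shows "induces_connected E (X \<union> Y)"
proof (rule ic_center[OF sym, of x])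
  show "x \<in> X \<union> Y" using assms by simp
  show "\<forall>z\<in>X \<union> Y. walkin E (X \<union> Y) x z"
  proof
    fix z assume "z \<in> X \<union> Y"
    then show "walkin E (X \<union> Y) x z"
    proof
      assume "z \<in> X" then show ?thesis using assms(2,4) unfolding ic_def2
        by (meson Un_upper1 walkin_mono)
    next
      assume "z \<in> Y"
      then have "walkin E (X \<union> Y) y z" using assms(3,5) unfolding ic_def2
        by (meson Un_upper2 walkin_mono)
      then show ?thesis using walkin_step_left[of E x y "X \<union> Y" z] assms(4,5,6) by simp
    qed
  qed
qed

lemma ic_star:
  assumes sym: "\<forall>x y. E x y \<longrightarrow> E y x"
    and "\<forall>Y\<in>\<Y>. induces_connected E Y \<and> (\<exists>y\<in>Y. E v y)"
  shows "induces_connected E (insert v (\<Union>\<Y>))"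
proof (rule ic_center[OF sym, of v])
  show "v \<in> insert v (\<Union>\<Y>)" by simp
  show "\<forall>z\<in>insert v (\<Union>\<Y>). walkin E (insert v (\<Union>\<Y>)) v z"
  proof
    fix z assume "z \<in> insert v (\<Union>\<Y>)"
    then consider "z = v" | Y where "Y \<in> \<Y>" "z \<in> Y" by auto
    then show "walkin E (insert v (\<Union>\<Y>)) v z"
    proof cases
      case 1 then show ?thesis by simp
    next
      case 2
      then obtain y where y: "y \<in> Y" "E v y" using assms(2) by blast
      have "walkin E Y y z" using assms(2) 2 y unfolding ic_def2 by blast
      then have "walkin E (insert v (\<Union>\<Y>)) y z" by (rule walkin_mono) (use 2 in auto)
      moreover have "y \<in> insert v (\<Union>\<Y>)" using y 2 by auto
      ultimately show ?thesis using walkin_step_left[of E v y "insert v (\<Union>\<Y>)" z] y(2) by simp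
    qed
  qed
qed

definition comp :: "('a \<Rightarrow> 'a \<Rightarrow> bool) \<Rightarrow> 'a set \<Rightarrow> 'a \<Rightarrow> 'a set" where
  "comp E S x = {y \<in> S. walkin E S x y}"

lemma comp_self: "x \<in> S \<Longrightarrow> x \<in> comp E S x"
  unfolding comp_def by simp

lemma comp_sub: "comp E S x \<subseteq> S"
  unfolding comp_def by auto

lemma walkin_comp:
  assumes "walkin E S x z" "x \<in> S"
  shows "walkin E (comp E S x) x z"
  using assms(1) unfolding walkin_def
proof (induction rule: rtranclp_induct)
  case base then show ?case by simp
next
  case (step y z)
  have "y \<in> comp E S x" using step(1) assms(2) walkin_ends[of E S x y]
    unfolding walkin_def comp_def by auto
  moreover have "z \<in> comp E S x" using step(1,2) unfolding comp_def walkin_def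
    by (auto intro: rtranclp.rtrancl_into_rtrancl)
  ultimately show ?case using step by (simp add: rtranclp.rtrancl_into_rtrancl)
qed

lemma comp_ic:
  assumes sym: "\<forall>x y. E x y \<longrightarrow> E y x" and "x \<in> S"
  shows "induces_connected E (comp E S x)"
proof (rule ic_center[OF sym, of x])
  show "x \<in> comp E S x" using assms(2) by (rule comp_self)
  show "\<forall>z\<in>comp E S x. walkin E (comp E S x) x z"
  proof
    fix z assume "z \<in> comp E S x"
    then have "walkin E S x z" unfolding comp_def by simp
    then show "walkin E (comp E S x) x z" by (rule walkin_comp[OF _ assms(2)])
  qed
qed

lemma comp_disj:
  assumes sym: "\<forall>x y. E x y \<longrightarrow> E y x" and "comp E S x \<inter> comp E S y \<noteq> {}"
  shows "comp E S x = comp E S y"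
proof -
  obtain z where z: "walkin E S x z" "walkin E S y z" using assms(2) unfolding comp_def by auto
  have "walkin E S z y" using walkin_sym[OF sym z(2)] .
  then have xy: "walkin E S x y" using z(1) walkin_trans by metis
  have yx: "walkin E S y x" using walkin_sym[OF sym xy] .
  show ?thesis
  proof
    show "comp E S x \<subseteq> comp E S y" unfolding comp_def using yx walkin_trans by fastforce
    show "comp E S y \<subseteq> comp E S x" unfolding comp_def using xy walkin_trans by fastforce
  qed
qed

lemma parent_exists:
  assumes sym: "\<forall>x y. E x y \<longrightarrow> E y x" and ic: "induces_connected E A" and r: "\<rho> \<in> A"
  shows "\<exists>\<pi> h. \<forall>w\<in>A-{\<rho>}. \<pi> w \<in> A \<and> E w (\<pi> w) \<and> (h (\<pi> w)::nat) < h w"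
proof -
  define R where "R = (\<lambda>a b. E a b \<and> a \<in> A \<and> b \<in> A)"
  define h where "h w = (LEAST n. (R ^^ n) \<rho> w)" for w
  have ex: "\<exists>u. u \<in> A \<and> E w u \<and> h u < h w" if w: "w \<in> A - {\<rho>}" for w
  proof -
    have "walkin E A \<rho> w" using ic r w unfolding ic_def2 by auto
    then have "R\<^sup>*\<^sup>* \<rho> w" unfolding walkin_def R_def .
    then obtain n where "(R ^^ n) \<rho> w" using rtranclp_imp_relpowp by metis
    then have hw: "(R ^^ h w) \<rho> w" unfolding h_def by (rule LeastI)
    show ?thesis
    proof (cases "h w")
      case 0
      then show ?thesis using hw w by simp
    next
      case (Suc m)
      then obtain u where u: "(R ^^ m) \<rho> u" "R u w" using hw by (metis relpowp_Suc_E)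
      have "h u \<le> m" unfolding h_def using u(1) by (rule Least_le)
      then have "h u < h w" using Suc by simp
      moreover have "E w u" using u(2) sym unfolding R_def by blast
      ultimately show ?thesis using u(2) unfolding R_def by blast
    qed
  qed
  define \<pi> where "\<pi> w = (SOME u. u \<in> A \<and> E w u \<and> h u < h w)" for w
  have "\<forall>w\<in>A-{\<rho>}. \<pi> w \<in> A \<and> E w (\<pi> w) \<and> h (\<pi> w) < h w"
  proof
    fix w assume "w \<in> A - {\<rho>}"
    from someI_ex[OF ex[OF this]] show "\<pi> w \<in> A \<and> E w (\<pi> w) \<and> h (\<pi> w) < h w"
      unfolding \<pi>_def .
  qed
  then show ?thesis by blast
qed

lemma root_or_child:
  assumes par: "\<forall>w\<in>B-{\<rho>}. \<pi> w \<in> B \<and> E w (\<pi> w) \<and> (h (\<pi> w)::nat) < h w"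
  shows "x \<in> B - {v} \<Longrightarrow> walkin E (B-{v}) x \<rho> \<or> (\<exists>w. w \<in> B - {\<rho>} \<and> \<pi> w = v \<and> walkin E (B-{v}) x w)"
proof (induction "h x" arbitrary: x rule: less_induct)
  case less
  show ?case
  proof (cases "x = \<rho>")
    case True then show ?thesis by simp
  next
    case False
    then have xB: "x \<in> B - {\<rho>}" using less.prems by simp
    let ?p = "\<pi> x"
    have p: "?p \<in> B" "E x ?p" "h ?p < h x" using par xB by auto
    show ?thesis
    proof (cases "?p = v")
      case True
      then show ?thesis using xB by auto
    next
      case False
      then have pB: "?p \<in> B - {v}" using p by simp
      from less.hyps[OF p(3) pB]
      show ?thesis
      proof
        assume "walkin E (B - {v}) ?p \<rho>"
        then have "walkin E (B - {v}) x \<rho>"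
          using walkin_step_left[of E x "?p" "B - {v}" \<rho>] p(2) less.prems pB by simp
        then show ?thesis by simp
      next
        assume "\<exists>w. w \<in> B - {\<rho>} \<and> \<pi> w = v \<and> walkin E (B - {v}) ?p w"
        then obtain w where w: "w \<in> B - {\<rho>}" "\<pi> w = v" "walkin E (B - {v}) ?p w" by blast
        have "walkin E (B - {v}) x w"
          using walkin_step_left[of E x "?p" "B - {v}" w] p(2) less.prems pB w(3) by simp
        then show ?thesis using w by blast
      qed
    qed
  qed
qed

lemma pieces:
  assumes sym: "\<forall>x y. E x y \<longrightarrow> E y x" and irr: "\<forall>x. \<not> E x x"
    and ic: "induces_connected E B" and vB: "v \<in> B" and rB: "\<rho> \<in> B" and fin: "finite B"
    and par: "\<forall>w\<in>B-{\<rho>}. \<pi> w \<in> B \<and> E w (\<pi> w) \<and> (h (\<pi> w)::nat) < h w"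
  shows "\<exists>\<X>. finite \<X> \<and> card \<X> \<le> 1 + card {w\<in>B-{\<rho>}. \<pi> w = v}
     \<and> (\<forall>X\<in>\<X>. X \<noteq> {} \<and> induces_connected E X \<and> (\<exists>x\<in>X. E v x))
     \<and> (\<forall>X\<in>\<X>. \<forall>Y\<in>\<X>. X \<noteq> Y \<longrightarrow> X \<inter> Y = {})
     \<and> \<Union>\<X> = B - {v}"
proof -
  define ch where "ch = {w\<in>B-{\<rho>}. \<pi> w = v}"
  define D where "D = ({\<rho>} - {v}) \<union> ch"
  define \<X> where "\<X> = comp E (B - {v}) ` D"
  have chsub: "ch \<subseteq> B - {v}"
  proof
    fix w assume "w \<in> ch"
    then have "w \<in> B" "E w v" using par unfolding ch_def by auto
    then show "w \<in> B - {v}" using irr by auto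
  qed
  have Dsub: "D \<subseteq> B - {v}" using chsub rB unfolding D_def by auto
  have finD: "finite D" using Dsub fin by (meson finite_Diff finite_subset)
  have "card \<X> \<le> card D" unfolding \<X>_def by (rule card_image_le[OF finD])
  also have "card D \<le> card ({\<rho>} - {v}) + card ch" unfolding D_def by (rule card_Un_le)
  also have "card ({\<rho>} - {v}) \<le> 1"
  proof -
    have "card ({\<rho>} - {v}) \<le> card {\<rho>}" by (rule card_mono) auto
    then show ?thesis by simp
  qed
  finally have card: "card \<X> \<le> 1 + card ch" by simp
  have fX: "finite \<X>" unfolding \<X>_def using finD by simp
  have props: "\<forall>X\<in>\<X>. X \<noteq> {} \<and> induces_connected E X \<and> (\<exists>x\<in>X. E v x)"
  proof
    fix X assume "X \<in> \<X>"
    then obtain r where r: "r \<in> D" "X = comp E (B - {v}) r" unfolding \<X>_def by auto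
    have rB: "r \<in> B - {v}" using r Dsub by auto
    have ne: "X \<noteq> {}" using comp_self[OF rB] r by auto
    have icX: "induces_connected E X" using comp_ic[OF sym rB] r by simp
    have nb: "\<exists>x\<in>X. E v x"
    proof (cases "r \<in> ch")
      case True
      then have "E r v" using par unfolding ch_def by auto
      then have "E v r" using sym by blast
      then show ?thesis using comp_self[OF rB] r by auto
    next
      case False
      then have rr: "r = \<rho>" "\<rho> \<noteq> v" using r unfolding D_def by auto
      have "walkin E B \<rho> v" using ic rB vB rr unfolding ic_def2 by auto
      from walkin_exit2[OF this, of "B - {v}"] rr rB
      obtain u z where uz: "u \<in> B - {v}" "z \<in> B" "z \<notin> B - {v}" "E u z" "walkin E (B \<inter> (B - {v})) \<rho> u"
        by auto
      have "z = v" using uz by auto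
      have "B \<inter> (B - {v}) = B - {v}" by auto
      then have "u \<in> comp E (B - {v}) \<rho>" using uz unfolding comp_def by simp
      moreover have "E v u" using uz \<open>z = v\<close> sym by blast
      ultimately show ?thesis using rr r by auto
    qed
    show "X \<noteq> {} \<and> induces_connected E X \<and> (\<exists>x\<in>X. E v x)" using ne icX nb by simp
  qed
  have disj: "\<forall>X\<in>\<X>. \<forall>Y\<in>\<X>. X \<noteq> Y \<longrightarrow> X \<inter> Y = {}"
  proof (intro ballI impI)
    fix X Y assume "X \<in> \<X>" "Y \<in> \<X>" "X \<noteq> Y"
    then obtain r s where "X = comp E (B - {v}) r" "Y = comp E (B - {v}) s" unfolding \<X>_def by auto
    then show "X \<inter> Y = {}" using comp_disj[OF sym, of "B - {v}" r s] \<open>X \<noteq> Y\<close> by auto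
  qed
  have un: "\<Union>\<X> = B - {v}"
  proof
    show "\<Union>\<X> \<subseteq> B - {v}" unfolding \<X>_def using comp_sub[of E "B - {v}"] by auto
    show "B - {v} \<subseteq> \<Union>\<X>"
    proof
      fix x assume x: "x \<in> B - {v}"
      from root_or_child[of B \<rho> \<pi> E h x v, OF par x] show "x \<in> \<Union>\<X>"
      proof
        assume w: "walkin E (B - {v}) x \<rho>"
        have "\<rho> \<noteq> v"
        proof
          assume "\<rho> = v"
          then show False using walkin_ends[OF w] x by auto
        qed
        then have "\<rho> \<in> D" "\<rho> \<in> B - {v}" unfolding D_def using rB by auto
        moreover have "x \<in> comp E (B - {v}) \<rho>" using walkin_sym[OF sym w] x unfolding comp_def by simp
        ultimately show ?thesis unfolding \<X>_def by (intro UnionI[of "comp E (B - {v}) \<rho>"]) auto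
      next
        assume "\<exists>w. w \<in> B - {\<rho>} \<and> \<pi> w = v \<and> walkin E (B - {v}) x w"
        then obtain w where w: "w \<in> ch" "walkin E (B - {v}) x w" unfolding ch_def by auto
        then have "w \<in> D" unfolding D_def by simp
        moreover have "x \<in> comp E (B - {v}) w" using walkin_sym[OF sym w(2)] x unfolding comp_def by simp
        ultimately show ?thesis unfolding \<X>_def by (intro UnionI[of "comp E (B - {v}) w"]) auto
      qed
    qed
  qed
  show ?thesis
    by (rule exI[of _ \<X>]) (use fX card props disj un in \<open>simp add: ch_def\<close>)
qed

definition path_in where
  "path_in V E k xs \<longleftrightarrow> xs \<noteq> [] \<and> set xs \<subseteq> Part V E k \<and> successively recom_move xs"

definition reach where
  "reach V E k P Q n \<longleftrightarrow> (\<exists>xs. path_in V E k xs \<and> hd xs = P \<and> last xs = Q \<and> length xs \<le> Suc n)"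

lemma reach_refl: "P \<in> Part V E k \<Longrightarrow> reach V E k P P n"
  unfolding reach_def path_in_def by (rule exI[of _ "[P]"]) simp

lemma reach_mono: "reach V E k P Q m \<Longrightarrow> m \<le> n \<Longrightarrow> reach V E k P Q n"
  unfolding reach_def by (metis Suc_le_mono le_trans)

lemma reach_step: "P \<in> Part V E k \<Longrightarrow> Q \<in> Part V E k \<Longrightarrow> recom_move P Q \<Longrightarrow> reach V E k P Q 1"
  unfolding reach_def path_in_def by (rule exI[of _ "[P, Q]"]) simp

lemma recom_sym: "recom_move P Q \<Longrightarrow> recom_move Q P"
  unfolding recom_move_def by metis

lemma reach_sym: "reach V E k P Q n \<Longrightarrow> reach V E k Q P n"
proof -
  assume "reach V E k P Q n"
  then obtain xs where xs: "path_in V E k xs" "hd xs = P" "last xs = Q" "length xs \<le> Suc n"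
    unfolding reach_def by blast
  have "successively recom_move (rev xs)"
    using xs(1) unfolding path_in_def by (simp add: recom_sym successively_mono[where P=recom_move])
  then have "path_in V E k (rev xs)" using xs(1) unfolding path_in_def by simp
  moreover have "hd (rev xs) = Q" "last (rev xs) = P" using xs(1,2,3) unfolding path_in_def
    by (simp_all add: hd_rev last_rev)
  ultimately show ?thesis unfolding reach_def using xs(4) by (intro exI[of _ "rev xs"]) simp
qed

lemma reach_trans:
  assumes "reach V E k P Q m" "reach V E k Q R n"
  shows "reach V E k P R (m + n)"
proof -
  obtain xs where xs: "path_in V E k xs" "hd xs = P" "last xs = Q" "length xs \<le> Suc m"
    using assms(1) unfolding reach_def by blast
  obtain ys where ys: "path_in V E k ys" "hd ys = Q" "last ys = R" "length ys \<le> Suc n"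
    using assms(2) unfolding reach_def by blast
  obtain ys' where ys': "ys = Q # ys'" using ys(1,2) unfolding path_in_def by (cases ys) auto
  define zs where "zs = xs @ ys'"
  have xsne: "xs \<noteq> []" using xs(1) unfolding path_in_def by simp
  have s1: "successively recom_move xs" using xs(1) unfolding path_in_def by simp
  have s2: "successively recom_move (Q # ys')" using ys(1) ys' unfolding path_in_def by simp
  have "successively recom_move zs"
  proof (cases ys')
    case Nil then show ?thesis using s1 unfolding zs_def by simp
  next
    case (Cons y ys'')
    then have "recom_move Q y" "successively recom_move ys'" using s2 by simp_all
    then show ?thesis unfolding zs_def using s1 xsne xs(3) Cons
      by (simp add: successively_append_iff)
  qed
  moreover have "set zs \<subseteq> Part V E k" using xs(1) ys(1) ys' unfolding path_in_def zs_def by auto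
  moreover have "hd zs = P" using xsne xs(2) unfolding zs_def by simp
  moreover have "last zs = R" using xs(3) ys(3) ys' unfolding zs_def by (cases ys') auto
  moreover have "length zs \<le> Suc (m + n)" using xs(4) ys(4) ys' unfolding zs_def by simp
  ultimately show ?thesis unfolding reach_def path_in_def using xsne unfolding zs_def by blast
qed

lemma part_disj: "P \<in> Part V E k \<Longrightarrow> A \<in> P \<Longrightarrow> B \<in> P \<Longrightarrow> x \<in> A \<Longrightarrow> x \<in> B \<Longrightarrow> A = B"
  unfolding Part_def by blast

lemma replace2:
  assumes P: "P \<in> Part V E k" and BC: "B \<in> P" "C \<in> P" "B \<noteq> C"
    and un: "B' \<union> C' = B \<union> C" and dj: "B' \<inter> C' = {}"
    and icB: "induces_connected E B'" and icC: "induces_connected E C'" and nB: "B' \<notin> P"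
  shows "insert B' (insert C' (P - {B, C})) \<in> Part V E k
       \<and> recom_move P (insert B' (insert C' (P - {B, C})))"
proof -
  define R where "R = P - {B, C}"
  define Q where "Q = insert B' (insert C' R)"
  have Pprops: "\<Union>P = V" "card P = k" "finite P" "\<forall>A\<in>P. \<forall>B\<in>P. A \<noteq> B \<longrightarrow> A \<inter> B = {}"
      "\<forall>A\<in>P. A \<noteq> {} \<and> induces_connected E A" using P unfolding Part_def by auto
  have neB: "B' \<noteq> {}" using icB unfolding ic_def2 by simp
  have neC: "C' \<noteq> {}" using icC unfolding ic_def2 by simp
  have Rdj: "D \<inter> B = {} \<and> D \<inter> C = {}" if "D \<in> R" for D
    using that Pprops(4) BC unfolding R_def by auto
  have Rne: "D \<noteq> {}" if "D \<in> R" for D using that Pprops(5) unfolding R_def by auto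
  have Rdj2: "D \<inter> B' = {} \<and> D \<inter> C' = {}" if "D \<in> R" for D
    using Rdj[OF that] un by blast
  have BnR: "B' \<notin> R" using Rdj2 neB by blast
  have CnR: "C' \<notin> R" using Rdj2 neC by blast
  have BC': "B' \<noteq> C'" using dj neB by blast
  have finR: "finite R" using Pprops(3) unfolding R_def by simp
  have cardR: "card R = k - 2"
  proof -
    have "card R = card P - card {B, C}" unfolding R_def
      by (rule card_Diff_subset) (use BC Pprops(3) in auto)
    then show ?thesis using BC Pprops(2) by simp
  qed
  have k2: "k \<ge> 2"
  proof -
    have "card {B, C} \<le> card P" by (rule card_mono) (use BC Pprops(3) in auto)
    then show ?thesis using BC Pprops(2) by simp
  qed
  have cardQ: "card Q = k" unfolding Q_def using finR BnR CnR BC' cardR k2 by simp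
  have unQ: "\<Union>Q = V"
  proof -
    have "\<Union>Q = B' \<union> C' \<union> \<Union>R" unfolding Q_def by auto
    also have "\<dots> = B \<union> C \<union> \<Union>R" using un by simp
    also have "\<dots> = \<Union>P" unfolding R_def using BC by auto
    finally show ?thesis using Pprops(1) by simp
  qed
  have djQ: "\<forall>A\<in>Q. \<forall>D\<in>Q. A \<noteq> D \<longrightarrow> A \<inter> D = {}"
  proof (intro ballI impI)
    fix A D assume A: "A \<in> Q" and D: "D \<in> Q" and AD: "A \<noteq> D"
    show "A \<inter> D = {}"
    proof (cases "A \<in> R")
      case AR: True
      show ?thesis
      proof (cases "D \<in> R")
        case True then show ?thesis using AR AD Pprops(4) unfolding R_def by auto
      next
        case False then have "D = B' \<or> D = C'" using D unfolding Q_def by auto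
        then show ?thesis using Rdj2[OF AR] by auto
      qed
    next
      case AnR: False
      then have A': "A = B' \<or> A = C'" using A unfolding Q_def by auto
      show ?thesis
      proof (cases "D \<in> R")
        case True then show ?thesis using A' Rdj2[OF True] by auto
      next
        case False then have "D = B' \<or> D = C'" using D unfolding Q_def by auto
        then show ?thesis using A' AD dj by auto
      qed
    qed
  qed
  have icQ: "\<forall>A\<in>Q. A \<noteq> {} \<and> induces_connected E A"
    using icB icC neB neC Pprops(5) unfolding Q_def R_def by auto
  have QP: "Q \<in> Part V E k" unfolding Part_def using unQ cardQ finR djQ icQ unfolding Q_def by simp
  have "recom_move P Q"
    unfolding recom_move_def
  proof (intro conjI exI)
    show "P \<noteq> Q" using nB unfolding Q_def by auto
    show "B \<in> P" "C \<in> P" "B \<noteq> C" by (fact BC)+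
    show "B' \<in> Q" "C' \<in> Q" unfolding Q_def by auto
    show "B' \<noteq> C'" by (fact BC')
    show "B \<union> C = B' \<union> C'" using un by simp
    show "P - {B, C} = Q - {B', C'}" unfolding Q_def R_def using BnR CnR unfolding R_def by auto
  qed
  then show ?thesis using QP unfolding Q_def R_def by simp
qed

lemma peel:
  assumes G: "graph V E" and conn: "induces_connected E (V - {v})" and k2: "k \<ge> 2"
  shows "finite \<X> \<Longrightarrow> P \<in> Part V E k \<Longrightarrow> B \<in> P \<Longrightarrow> v \<in> B
    \<Longrightarrow> (\<forall>X\<in>\<X>. X \<noteq> {} \<and> induces_connected E X \<and> (\<exists>x\<in>X. E v x))
    \<Longrightarrow> (\<forall>X\<in>\<X>. \<forall>Y\<in>\<X>. X \<noteq> Y \<longrightarrow> X \<inter> Y = {})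
    \<Longrightarrow> \<Union>\<X> = B - {v}
    \<Longrightarrow> \<exists>Q. {v} \<in> Q \<and> reach V E k P Q (card \<X>)"
proof (induction "card \<X>" arbitrary: \<X> P B rule: less_induct)
  case less
  have sym: "\<forall>x y. E x y \<longrightarrow> E y x" using G unfolding graph_def by blast
  have Pprops: "\<Union>P = V" "card P = k" "finite P" "\<forall>A\<in>P. \<forall>B\<in>P. A \<noteq> B \<longrightarrow> A \<inter> B = {}"
      "\<forall>A\<in>P. A \<noteq> {} \<and> induces_connected E A" using less.prems(2) unfolding Part_def by auto
  show ?case
  proof (cases "\<X> = {}")
    case True
    then have "B = {v}" using less.prems(4,7) by auto
    then show ?thesis using reach_refl[OF less.prems(2)] less.prems(3) by auto
  next
    case False
    then obtain X0 where X0: "X0 \<in> \<X>" by blast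
    then obtain x0 where x0: "x0 \<in> X0" using less.prems(5) by blast
    then have x0B: "x0 \<in> B - {v}" using less.prems(7) X0 by blast
    have "card (P - {B}) = k - 1" using Pprops(2,3) less.prems(3) by (simp add: card_Diff_singleton)
    then have "P - {B} \<noteq> {}" using k2 by (intro notI) simp
    then obtain D where D: "D \<in> P" "D \<noteq> B" by blast
    then obtain d where d: "d \<in> D" using Pprops(5) by blast
    have dnB: "d \<notin> B" using Pprops(4) D less.prems(3) d by blast
    have dV: "d \<in> V - {v}" using Pprops(1) D d dnB less.prems(4) by blast
    have x0V: "x0 \<in> V - {v}" using Pprops(1) less.prems(3) x0B by blast
    have "walkin E (V - {v}) x0 d" using conn x0V dV unfolding ic_def2 by blast
    from walkin_exit2[OF this, of "B - {v}"] x0B dnB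
    obtain u z where uz: "u \<in> B - {v}" "z \<in> V - {v}" "z \<notin> B - {v}" "E u z" by blast
    have znB: "z \<notin> B" using uz by blast
    obtain C where C: "C \<in> P" "z \<in> C" using Pprops(1) uz(2) by blast
    have CB: "C \<noteq> B" using C znB by blast
    obtain X where X: "X \<in> \<X>" "u \<in> X" using uz(1) less.prems(7) by blast
    have XB: "X \<subseteq> B - {v}" using X less.prems(7) by blast
    define B' where "B' = B - X"
    define C' where "C' = C \<union> X"
    have B'eq: "B' = insert v (\<Union>(\<X> - {X}))"
    proof
      show "B' \<subseteq> insert v (\<Union>(\<X> - {X}))"
      proof
        fix y assume y: "y \<in> B'"
        show "y \<in> insert v (\<Union>(\<X> - {X}))"
        proof (cases "y = v")
          case False
          then have "y \<in> \<Union>\<X>" using y less.prems(7) unfolding B'_def by blast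
          then obtain Y where "Y \<in> \<X>" "y \<in> Y" by blast
          moreover have "Y \<noteq> X" using y \<open>y \<in> Y\<close> unfolding B'_def by blast
          ultimately show ?thesis by blast
        qed simp
      qed
      show "insert v (\<Union>(\<X> - {X})) \<subseteq> B'"
      proof
        fix y assume "y \<in> insert v (\<Union>(\<X> - {X}))"
        then consider "y = v" | Y where "Y \<in> \<X>" "Y \<noteq> X" "y \<in> Y" by blast
        then show "y \<in> B'"
        proof cases
          case 1 then show ?thesis using less.prems(4) XB unfolding B'_def by blast
        next
          case 2
          then have "y \<notin> X" using less.prems(6) X(1) by blast
          moreover have "y \<in> B" using 2 less.prems(7) by blast
          ultimately show ?thesis unfolding B'_def by blast
        qed
      qed
    qed
    have icB': "induces_connected E B'" unfolding B'eq
      by (rule ic_star[OF sym]) (use less.prems(5) in blast)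
    have icC: "induces_connected E C" using Pprops(5) C by blast
    have icX: "induces_connected E X" using less.prems(5) X by blast
    have "E z u" using sym uz(4) by blast
    then have icC': "induces_connected E C'" unfolding C'_def
      using ic_union_edge[OF sym icC icX C(2) X(2)] by blast
    have BCdj: "B \<inter> C = {}" using Pprops(4) less.prems(3) C(1) CB by blast
    have un: "B' \<union> C' = B \<union> C" unfolding B'_def C'_def using XB by blast
    have dj: "B' \<inter> C' = {}" unfolding B'_def C'_def using BCdj by blast
    have vB': "v \<in> B'" using less.prems(4) XB unfolding B'_def by blast
    have B'nP: "B' \<notin> P"
    proof
      assume "B' \<in> P"
      then have "B' = B" using part_disj[OF less.prems(2) _ less.prems(3) vB' less.prems(4)] by blast
      then show False using X(2) XB unfolding B'_def by blast
    qed
    define Q where "Q = insert B' (insert C' (P - {B, C}))"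
    have r: "Q \<in> Part V E k \<and> recom_move P Q" unfolding Q_def
      by (rule replace2[OF less.prems(2) less.prems(3) C(1) CB[symmetric] un dj icB' icC' B'nP])
    have step: "reach V E k P Q 1" using reach_step[OF less.prems(2)] r by blast
    have cardlt: "card (\<X> - {X}) < card \<X>" by (rule card_Diff1_less[OF less.prems(1) X(1)])
    have "\<exists>Q'. {v} \<in> Q' \<and> reach V E k Q Q' (card (\<X> - {X}))"
    proof (rule less.hyps[OF cardlt])
      show "finite (\<X> - {X})" using less.prems(1) by simp
      show "Q \<in> Part V E k" using r by simp
      show "B' \<in> Q" unfolding Q_def by simp
      show "v \<in> B'" by (fact vB')
      show "\<forall>Xa\<in>\<X> - {X}. Xa \<noteq> {} \<and> induces_connected E Xa \<and> (\<exists>x\<in>Xa. E v x)"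
        using less.prems(5) by blast
      show "\<forall>Xa\<in>\<X> - {X}. \<forall>Y\<in>\<X> - {X}. Xa \<noteq> Y \<longrightarrow> Xa \<inter> Y = {}"
        using less.prems(6) by blast
      show "\<Union>(\<X> - {X}) = B' - {v}"
      proof -
        have "v \<notin> \<Union>(\<X> - {X})" using less.prems(7) by blast
        then show ?thesis unfolding B'eq by blast
      qed
    qed
    then obtain Q' where Q': "{v} \<in> Q'" "reach V E k Q Q' (card (\<X> - {X}))" by blast
    have "reach V E k P Q' (1 + card (\<X> - {X}))" by (rule reach_trans[OF step Q'(2)])
    moreover have "1 + card (\<X> - {X}) = card \<X>"
    proof -
      have "card \<X> > 0" using less.prems(1) X(1) card_gt_0_iff by blast
      then show ?thesis using card_Diff_singleton[OF X(1)] by simp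
    qed
    ultimately show ?thesis using Q'(1) by auto
  qed
qed

definition delv :: "('a \<Rightarrow> 'a \<Rightarrow> bool) \<Rightarrow> 'a \<Rightarrow> 'a \<Rightarrow> 'a \<Rightarrow> bool" where
  "delv E v = (\<lambda>x y. E x y \<and> x \<noteq> v \<and> y \<noteq> v)"

lemma ic_restrict: "v \<notin> A \<Longrightarrow> induces_connected (delv E v) A = induces_connected E A"
proof -
  assume "v \<notin> A"
  then have "(\<lambda>a b. delv E v a b \<and> a \<in> A \<and> b \<in> A) = (\<lambda>a b. E a b \<and> a \<in> A \<and> b \<in> A)"
    by (auto simp: fun_eq_iff delv_def)
  then show ?thesis unfolding induces_connected_def by simp
qed

lemma Part_remove:
  assumes Q: "Q \<in> Part V E k" and v: "{v} \<in> Q"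
  shows "Q - {{v}} \<in> Part (V - {v}) (delv E v) (k - 1)"
proof -
  have Qp: "\<Union>Q = V" "card Q = k" "finite Q" "\<forall>A\<in>Q. \<forall>B\<in>Q. A \<noteq> B \<longrightarrow> A \<inter> B = {}"
      "\<forall>A\<in>Q. A \<noteq> {} \<and> induces_connected E A" using Q unfolding Part_def by auto
  have nv: "v \<notin> A" if "A \<in> Q - {{v}}" for A
  proof -
    have "A \<in> Q" "A \<noteq> {v}" using that by auto
    then have "A \<inter> {v} = {}" using Qp(4)[rule_format, of A "{v}"] v by simp
    then show ?thesis by simp
  qed
  have "\<Union>(Q - {{v}}) = V - {v}"
  proof
    show "\<Union>(Q - {{v}}) \<subseteq> V - {v}" using nv Qp(1) by auto
    show "V - {v} \<subseteq> \<Union>(Q - {{v}})"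
    proof
      fix x assume "x \<in> V - {v}"
      then obtain A where "A \<in> Q" "x \<in> A" "x \<noteq> v" using Qp(1) by blast
      then show "x \<in> \<Union>(Q - {{v}})" by blast
    qed
  qed
  moreover have "card (Q - {{v}}) = k - 1" using Qp(2) v by (simp add: card_Diff_singleton)
  moreover have "\<forall>A\<in>Q - {{v}}. A \<noteq> {} \<and> induces_connected (delv E v) A"
  proof
    fix A assume A: "A \<in> Q - {{v}}"
    then show "A \<noteq> {} \<and> induces_connected (delv E v) A"
      using Qp(5) ic_restrict[OF nv[OF A], of E] by auto
  qed
  ultimately show ?thesis unfolding Part_def using Qp(3,4) by auto
qed

lemma Part_insert:
  assumes R: "R \<in> Part (V - {v}) (delv E v) k" and vV: "v \<in> V"
  shows "insert {v} R \<in> Part V E (Suc k) \<and> {v} \<notin> R"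
proof -
  have Rp: "\<Union>R = V - {v}" "card R = k" "finite R" "\<forall>A\<in>R. \<forall>B\<in>R. A \<noteq> B \<longrightarrow> A \<inter> B = {}"
      "\<forall>A\<in>R. A \<noteq> {} \<and> induces_connected (delv E v) A" using R unfolding Part_def by auto
  have nv: "v \<notin> A" if "A \<in> R" for A using that Rp(1) by auto
  have nR: "{v} \<notin> R" using nv by auto
  have icv: "induces_connected E {v}" unfolding ic_def2 by simp
  have "insert {v} R \<in> Part V E (Suc k)"
    unfolding Part_def
  proof (intro CollectI conjI)
    show "\<Union>(insert {v} R) = V" using Rp(1) vV by auto
    show "card (insert {v} R) = Suc k" using Rp(2,3) nR by simp
    show "finite (insert {v} R)" using Rp(3) by simp
    show "\<forall>A\<in>insert {v} R. \<forall>B\<in>insert {v} R. A \<noteq> B \<longrightarrow> A \<inter> B = {}"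
      using Rp(4) nv by auto
    show "\<forall>A\<in>insert {v} R. A \<noteq> {} \<and> induces_connected E A"
    proof
      fix A assume "A \<in> insert {v} R"
      then show "A \<noteq> {} \<and> induces_connected E A"
      proof
        assume "A = {v}" then show ?thesis using icv by simp
      next
        assume A: "A \<in> R"
        then show ?thesis using Rp(5) ic_restrict[OF nv[OF A], of E] by auto
      qed
    qed
  qed
  then show ?thesis using nR by simp
qed

lemma recom_lift:
  assumes m: "recom_move R R'" and "{v} \<notin> R" "{v} \<notin> R'"
  shows "recom_move (insert {v} R) (insert {v} R')"
proof -
  obtain A B C D where w: "R \<noteq> R'" "A \<in> R" "B \<in> R" "A \<noteq> B" "C \<in> R'" "D \<in> R'" "C \<noteq> D"
    "A \<union> B = C \<union> D" "R - {A, B} = R' - {C, D}" using m unfolding recom_move_def by auto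
  have ne: "insert {v} R \<noteq> insert {v} R'"
  proof
    assume "insert {v} R = insert {v} R'"
    then have "insert {v} R - {{v}} = insert {v} R' - {{v}}" by simp
    then show False using w(1) assms(2,3) by simp
  qed
  have "A \<noteq> {v}" "B \<noteq> {v}" using w(2,3) assms(2) by metis+
  then have "{v} \<notin> {A, B}" by simp
  then have e1: "insert {v} R - {A, B} = insert {v} (R - {A, B})" by (simp only: insert_Diff_if if_False)
  have "C \<noteq> {v}" "D \<noteq> {v}" using w(5,6) assms(3) by metis+
  then have "{v} \<notin> {C, D}" by simp
  then have e2: "insert {v} R' - {C, D} = insert {v} (R' - {C, D})" by (simp only: insert_Diff_if if_False)
  have "insert {v} (R - {A, B}) = insert {v} (R' - {C, D})" using w(9) by (rule arg_cong)
  then have e3: "insert {v} R - {A, B} = insert {v} R' - {C, D}" by (simp only: e1 e2)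
  show ?thesis unfolding recom_move_def
    apply (rule conjI[OF ne])
    apply (rule exI[of _ A], rule exI[of _ B], rule exI[of _ C], rule exI[of _ D])
    apply (intro conjI insertI2 w(2) w(3) w(5) w(6) w(4) w(7) w(8) e3)
    done
qed

lemma reach_lift:
  assumes r: "reach (V - {v}) (delv E v) k R1 R2 n" and vV: "v \<in> V"
  shows "reach V E (Suc k) (insert {v} R1) (insert {v} R2) n"
proof -
  obtain xs where xs: "path_in (V - {v}) (delv E v) k xs" "hd xs = R1" "last xs = R2" "length xs \<le> Suc n"
    using r unfolding reach_def by blast
  let ?ys = "map (insert {v}) xs"
  have sx: "set xs \<subseteq> Part (V - {v}) (delv E v) k" "successively recom_move xs" "xs \<noteq> []"
    using xs(1) unfolding path_in_def by auto
  have "set ?ys \<subseteq> Part V E (Suc k)" using sx(1) Part_insert[OF _ vV] by auto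
  moreover have "successively recom_move ?ys"
    unfolding successively_map
  proof (rule successively_mono[OF sx(2)])
    fix x y
    assume xy: "x \<in> set xs" "y \<in> set xs" "recom_move x y"
    have "x \<in> Part (V - {v}) (delv E v) k" "y \<in> Part (V - {v}) (delv E v) k" using xy sx(1) by auto
    then have "{v} \<notin> x" "{v} \<notin> y" using Part_insert[OF _ vV] by blast+
    then show "recom_move (insert {v} x) (insert {v} y)" using recom_lift[OF xy(3)] by simp
  qed
  moreover have "hd ?ys = insert {v} R1" "last ?ys = insert {v} R2"
    using sx(3) xs(2,3) by (simp_all add: hd_map last_map)
  ultimately show ?thesis unfolding reach_def path_in_def using sx(3) xs(4)
    by (intro exI[of _ ?ys]) simp
qed

lemma min_comp:
  assumes G: "graph V E" and conn: "induces_connected E V" and a0: "a0 \<in> V" "x1 \<in> V" "x1 \<noteq> a0"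
  shows "\<exists>a C. a \<in> V \<and> C \<noteq> {} \<and> C \<subseteq> V - {a} \<and> (\<forall>v\<in>C. induces_connected E (V - {v}))
            \<and> (\<forall>v\<in>C. \<forall>w. E v w \<longrightarrow> w \<in> C \<or> w = a)"
proof -
  have sym: "\<forall>x y. E x y \<longrightarrow> E y x" and edges: "\<forall>x y. E x y \<longrightarrow> x \<in> V \<and> y \<in> V"
    and finV: "finite V" using G unfolding graph_def by auto
  define Pr where "Pr = (\<lambda>p. fst p \<in> V \<and> snd p \<in> V - {fst p})"
  define m where "m = (\<lambda>p. card (comp E (V - {fst p}) (snd p)))"
  have "Pr (a0, x1)" unfolding Pr_def using a0 by simp
  from ex_has_least_nat[of Pr "(a0, x1)" m, OF this]
  obtain p where p: "Pr p" "\<forall>q. Pr q \<longrightarrow> m p \<le> m q" by blast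
  define a where "a = fst p"
  define x where "x = snd p"
  define C where "C = comp E (V - {a}) x"
  have aV: "a \<in> V" and xV: "x \<in> V - {a}" using p(1) unfolding Pr_def a_def x_def by auto
  have min: "card C \<le> card (comp E (V - {b}) y)" if "b \<in> V" "y \<in> V - {b}" for b y
    using p(2)[rule_format, of "(b, y)"] that unfolding Pr_def m_def C_def a_def x_def by simp
  have Cne: "C \<noteq> {}" using comp_self[OF xV] unfolding C_def by auto
  have Csub: "C \<subseteq> V - {a}" unfolding C_def by (rule comp_sub)
  have finC: "finite C" using Csub finV by (meson finite_Diff finite_subset)
  have nb: "\<forall>v\<in>C. \<forall>w. E v w \<longrightarrow> w \<in> C \<or> w = a"
  proof (intro ballI allI impI)
    fix v w assume v: "v \<in> C" and e: "E v w"
    show "w \<in> C \<or> w = a"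
    proof (cases "w = a")
      case False
      then have wV: "w \<in> V - {a}" using edges e by auto
      have "walkin E (V - {a}) x v" "v \<in> V - {a}" using v unfolding C_def comp_def by auto
      then have "walkin E (V - {a}) x w" using walkin_step e wV by metis
      then show ?thesis using wV unfolding C_def comp_def by simp
    qed simp
  qed
  have nc: "\<forall>v\<in>C. induces_connected E (V - {v})"
  proof
    fix v assume vC: "v \<in> C"
    have vV: "v \<in> V" "v \<noteq> a" using vC Csub by auto
    show "induces_connected E (V - {v})"
    proof (rule ccontr)
      assume nic: "\<not> induces_connected E (V - {v})"
      have aV': "a \<in> V - {v}" using aV vV by auto
      have "\<exists>y. y \<in> V - {v} \<and> \<not> walkin E (V - {v}) a y"
      proof (rule ccontr)
        assume "\<not> (\<exists>y. y \<in> V - {v} \<and> \<not> walkin E (V - {v}) a y)"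
        then have "\<forall>z\<in>V - {v}. walkin E (V - {v}) a z" by blast
        then have "induces_connected E (V - {v})" using ic_center[OF sym aV'] by blast
        then show False using nic by simp
      qed
      then obtain y where y: "y \<in> V - {v}" "\<not> walkin E (V - {v}) a y" by blast
      define C' where "C' = comp E (V - {v}) y"
      have C'C: "C' \<subseteq> C"
      proof
        fix z assume zC': "z \<in> C'"
        then have wyz: "walkin E (V - {v}) y z" and zV: "z \<in> V - {v}" unfolding C'_def comp_def by auto
        show "z \<in> C"
        proof (rule ccontr)
          assume znC: "z \<notin> C"
          have za: "z \<noteq> a"
          proof
            assume "z = a"
            then have "walkin E (V - {v}) a y" using walkin_sym[OF sym wyz] by simp
            then show False using y by simp
          qed
          have "walkin E V z a" using conn zV aV unfolding ic_def2 by auto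
          from walkin_exit2[OF this, of "V - C - {a}"] znC za zV
          obtain u z' where uz: "u \<in> V - C - {a}" "z' \<in> V" "z' \<notin> V - C - {a}" "E u z'"
            "walkin E (V \<inter> (V - C - {a})) z u" by auto
          have z'a: "z' = a"
          proof (rule ccontr)
            assume "z' \<noteq> a"
            then have "z' \<in> C" using uz by auto
            moreover have "E z' u" using sym uz(4) by blast
            ultimately have "u \<in> C \<or> u = a" using nb by blast
            then show False using uz(1) by auto
          qed
          have sub: "V \<inter> (V - C - {a}) \<subseteq> V - {v}" using vC by auto
          have "walkin E (V - {v}) z u" using walkin_mono[OF uz(5) sub] .
          moreover have "u \<in> V - {v}" using uz(1) vC by auto
          ultimately have "walkin E (V - {v}) z a" using walkin_step[of E "V - {v}" z u a] uz(4) z'a aV' by simp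
          then have "walkin E (V - {v}) y a" using wyz walkin_trans by metis
          then have "walkin E (V - {v}) a y" using walkin_sym[OF sym] by metis
          then show False using y by simp
        qed
      qed
      have "v \<notin> C'" unfolding C'_def comp_def by simp
      then have "C' \<subset> C" using C'C vC by auto
      then have "card C' < card C" using finC psubset_card_mono by metis
      moreover have "card C \<le> card C'" unfolding C'_def using min[OF vV(1) y(1)] .
      ultimately show False by simp
    qed
  qed
  show ?thesis using aV Cne Csub nc nb by blast
qed

definition pstruct :: "('a \<Rightarrow> 'a \<Rightarrow> bool) \<Rightarrow> 'a set \<Rightarrow> 'a \<times> ('a \<Rightarrow> 'a) \<times> ('a \<Rightarrow> nat)" where
  "pstruct E A = (SOME t. case t of (\<rho>, \<pi>, h) \<Rightarrow> \<rho> \<in> A \<and> (\<forall>w\<in>A-{\<rho>}. \<pi> w \<in> A \<and> E w (\<pi> w) \<and> h (\<pi> w) < h w))"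

lemma pstruct_ok:
  assumes sym: "\<forall>x y. E x y \<longrightarrow> E y x" and ic: "induces_connected E A" and eq: "pstruct E A = (\<rho>, \<pi>, h)"
  shows "\<rho> \<in> A \<and> (\<forall>w\<in>A-{\<rho>}. \<pi> w \<in> A \<and> E w (\<pi> w) \<and> h (\<pi> w) < h w)"
proof -
  obtain r where r: "r \<in> A" using ic unfolding ic_def2 by auto
  obtain \<pi>0 h0 where ph: "\<forall>w\<in>A-{r}. \<pi>0 w \<in> A \<and> E w (\<pi>0 w) \<and> (h0 (\<pi>0 w)::nat) < h0 w"
    using parent_exists[OF sym ic r] by blast
  let ?Q = "\<lambda>t. case t of (\<rho>, \<pi>, h) \<Rightarrow> \<rho> \<in> A \<and> (\<forall>w\<in>A-{\<rho>}. \<pi> w \<in> A \<and> E w (\<pi> w) \<and> (h (\<pi> w)::nat) < h w)"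
  have "?Q (r, \<pi>0, h0)" using r ph by simp
  then have "?Q (SOME t. ?Q t)" by (rule someI)
  then have "?Q (pstruct E A)" unfolding pstruct_def .
  then show ?thesis using eq by simp
qed

definition chl :: "('a \<Rightarrow> 'a \<Rightarrow> bool) \<Rightarrow> 'a set set \<Rightarrow> 'a \<Rightarrow> 'a set" where
  "chl E P v = {w. \<exists>A\<in>P. v \<in> A \<and> w \<in> A \<and> w \<noteq> fst (pstruct E A) \<and> fst (snd (pstruct E A)) w = v}"

lemma chl_eq:
  assumes P: "P \<in> Part V E k" and A: "A \<in> P" "v \<in> A" and eq: "pstruct E A = (\<rho>, \<pi>, h)"
  shows "chl E P v = {w\<in>A-{\<rho>}. \<pi> w = v}"
proof
  show "chl E P v \<subseteq> {w\<in>A-{\<rho>}. \<pi> w = v}"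
  proof
    fix w assume "w \<in> chl E P v"
    then obtain A' where A': "A' \<in> P" "v \<in> A'" "w \<in> A'" "w \<noteq> fst (pstruct E A')" "fst (snd (pstruct E A')) w = v"
      unfolding chl_def by blast
    have "A' = A" using part_disj[OF P A'(1) A(1) A'(2) A(2)] .
    then show "w \<in> {w\<in>A-{\<rho>}. \<pi> w = v}" using A' eq by simp
  qed
  show "{w\<in>A-{\<rho>}. \<pi> w = v} \<subseteq> chl E P v"
    unfolding chl_def using A eq by force
qed

lemma chl_props:
  assumes G: "graph V E" and P: "P \<in> Part V E k" and w: "w \<in> chl E P v"
  shows "E w v" "\<And>v'. w \<in> chl E P v' \<Longrightarrow> v' = v"
proof -
  have sym: "\<forall>x y. E x y \<longrightarrow> E y x" using G unfolding graph_def by blast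
  obtain A where A: "A \<in> P" "v \<in> A" "w \<in> A" "w \<noteq> fst (pstruct E A)" "fst (snd (pstruct E A)) w = v"
    using w unfolding chl_def by blast
  obtain \<rho> \<pi> h where eq: "pstruct E A = (\<rho>, \<pi>, h)" by (cases "pstruct E A") auto
  have ic: "induces_connected E A" using P A(1) unfolding Part_def by auto
  have "\<forall>w\<in>A-{\<rho>}. \<pi> w \<in> A \<and> E w (\<pi> w) \<and> h (\<pi> w) < h w" using pstruct_ok[OF sym ic eq] by simp
  then show "E w v" using A eq by auto
  fix v' assume "w \<in> chl E P v'"
  then obtain A' where A': "A' \<in> P" "v' \<in> A'" "w \<in> A'" "fst (snd (pstruct E A')) w = v'"
    unfolding chl_def by blast
  have "A' = A" using part_disj[OF P A'(1) A(1) A'(3) A(3)] .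
  then show "v' = v" using A(5) A'(4) by simp
qed

lemma count_ch:
  assumes G: "graph V E" and P: "P \<in> Part V E k" and finC: "finite C"
    and nb: "\<forall>v\<in>C. \<forall>w. E v w \<longrightarrow> w \<in> C \<or> w = a"
  shows "(\<Sum>v\<in>C. card (chl E P v)) \<le> card C + 1"
proof -
  have sym: "\<forall>x y. E x y \<longrightarrow> E y x" using G unfolding graph_def by blast
  have sub: "chl E P v \<subseteq> insert a C" if "v \<in> C" for v
  proof
    fix w assume "w \<in> chl E P v"
    then have "E w v" by (rule chl_props(1)[OF G P])
    then have "E v w" using sym by blast
    then show "w \<in> insert a C" using nb that by blast
  qed
  have fin: "\<forall>v\<in>C. finite (chl E P v)" using sub finC by (meson finite_insert finite_subset)
  have dj: "\<forall>v\<in>C. \<forall>v'\<in>C. v \<noteq> v' \<longrightarrow> chl E P v \<inter> chl E P v' = {}"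
    using chl_props(2)[OF G P] by blast
  have "(\<Sum>v\<in>C. card (chl E P v)) = card (\<Union>(chl E P ` C))"
    using card_UN_disjoint[OF finC fin dj] by simp
  also have "\<dots> \<le> card (insert a C)" by (rule card_mono) (use finC sub in auto)
  also have "\<dots> \<le> card C + 1" using finC by (simp add: card_insert_if)
  finally show ?thesis .
qed

lemma choose_v:
  assumes G: "graph V E" and P1: "P1 \<in> Part V E k" and P2: "P2 \<in> Part V E k" and finC: "finite C"
    and Cne: "C \<noteq> {}" and nb: "\<forall>v\<in>C. \<forall>w. E v w \<longrightarrow> w \<in> C \<or> w = a"
  shows "\<exists>v\<in>C. card (chl E P1 v) + card (chl E P2 v) \<le> 4"
proof (rule ccontr)
  assume "\<not> ?thesis"
  then have ge: "\<forall>v\<in>C. 5 \<le> card (chl E P1 v) + card (chl E P2 v)" by auto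
  have "card C * 5 \<le> (\<Sum>v\<in>C. card (chl E P1 v) + card (chl E P2 v))"
    using sum_bounded_below[of C 5 "\<lambda>v. card (chl E P1 v) + card (chl E P2 v)"] ge by simp
  also have "\<dots> = (\<Sum>v\<in>C. card (chl E P1 v)) + (\<Sum>v\<in>C. card (chl E P2 v))" by (simp add: sum.distrib)
  also have "\<dots> \<le> 2 * card C + 2" using count_ch[OF G P1 finC nb] count_ch[OF G P2 finC nb] by simp
  finally have "card C * 5 \<le> 2 * card C + 2" .
  moreover have "card C \<ge> 1" using finC Cne by (simp add: Suc_leI card_gt_0_iff)
  ultimately show False by simp
qed

lemma to_singleton:
  assumes G: "graph V E" and conn: "induces_connected E (V - {v})" and k2: "k \<ge> 2"
    and P: "P \<in> Part V E k" and vV: "v \<in> V"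
  shows "\<exists>Q. {v} \<in> Q \<and> reach V E k P Q (1 + card (chl E P v))"
proof -
  have sym: "\<forall>x y. E x y \<longrightarrow> E y x" and irr: "\<forall>x. \<not> E x x" and finV: "finite V"
    using G unfolding graph_def by auto
  have Pp: "\<Union>P = V" "\<forall>A\<in>P. A \<noteq> {} \<and> induces_connected E A" using P unfolding Part_def by auto
  obtain A where A: "A \<in> P" "v \<in> A" using Pp(1) vV by blast
  have icA: "induces_connected E A" using Pp(2) A(1) by blast
  have finA: "finite A" using A Pp(1) finV by (meson Union_upper finite_subset)
  obtain \<rho> \<pi> h where eq: "pstruct E A = (\<rho>, \<pi>, h)" by (cases "pstruct E A") auto
  have ps: "\<rho> \<in> A" "\<forall>w\<in>A-{\<rho>}. \<pi> w \<in> A \<and> E w (\<pi> w) \<and> h (\<pi> w) < h w"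
    using pstruct_ok[OF sym icA eq] by (rule conjunct1, rule conjunct2)
  obtain \<X> where X: "finite \<X>" "card \<X> \<le> 1 + card {w\<in>A-{\<rho>}. \<pi> w = v}"
     "\<forall>X\<in>\<X>. X \<noteq> {} \<and> induces_connected E X \<and> (\<exists>x\<in>X. E v x)"
     "\<forall>X\<in>\<X>. \<forall>Y\<in>\<X>. X \<noteq> Y \<longrightarrow> X \<inter> Y = {}"
     "\<Union>\<X> = A - {v}"
    using pieces[OF sym irr icA A(2) ps(1) finA ps(2)] by (elim exE conjE) (rule that)
  obtain Q where Q: "{v} \<in> Q" "reach V E k P Q (card \<X>)"
    using peel[OF G conn k2 X(1) P A X(3) X(4) X(5)] by (elim exE conjE) (rule that)
  have "card \<X> \<le> 1 + card (chl E P v)" using X(2) chl_eq[OF P A eq] by simp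
  then show ?thesis by (intro exI[of _ Q] conjI Q(1) reach_mono[OF Q(2)])
qed

lemma main:
  "k \<ge> 1 \<Longrightarrow> connected_graph V E \<Longrightarrow> P1 \<in> Part V E k \<Longrightarrow> P2 \<in> Part V E k
   \<Longrightarrow> reach V E k P1 P2 (6 * (k - 1))"
proof (induction k arbitrary: V E P1 P2)
  case 0 then show ?case by simp
next
  case (Suc k)
  have G: "graph V E" and connV: "induces_connected E V" using Suc.prems(2) unfolding connected_graph_def by auto
  have sym: "\<forall>x y. E x y \<longrightarrow> E y x" and irr: "\<forall>x. \<not> E x x" and finV: "finite V"
    and edges: "\<forall>x y. E x y \<longrightarrow> x \<in> V \<and> y \<in> V"
    using G unfolding graph_def by auto
  show ?case
  proof (cases "k = 0")
    case True
    have one: "P = {V}" if "P \<in> Part V E (Suc 0)" for P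
    proof -
      have "card P = 1" "\<Union>P = V" using that unfolding Part_def by auto
      then obtain A where "P = {A}" by (metis card_1_singletonE)
      then show ?thesis using \<open>\<Union>P = V\<close> by simp
    qed
    have "P1 = {V}" "P2 = {V}" using one Suc.prems(3,4) True by auto
    then have "P1 = P2" by simp
    then show ?thesis using reach_refl Suc.prems(3) by metis
  next
    case False
    have k2: "Suc k \<ge> 2" using False by simp
    have P1p: "\<Union>P1 = V" "card P1 = Suc k" "finite P1" "\<forall>A\<in>P1. \<forall>B\<in>P1. A \<noteq> B \<longrightarrow> A \<inter> B = {}"
      "\<forall>A\<in>P1. A \<noteq> {} \<and> induces_connected E A" using Suc.prems(3) unfolding Part_def by auto
    obtain A0 where A0: "A0 \<in> P1" using P1p(2) by (metis card.empty ex_in_conv nat.distinct(1))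
    have "card (P1 - {A0}) = k" using P1p(2,3) A0 by (simp add: card_Diff_singleton)
    then have "P1 - {A0} \<noteq> {}" using False by (intro notI) simp
    then obtain A1 where A1: "A1 \<in> P1" "A1 \<noteq> A0" by blast
    obtain x0 where x0: "x0 \<in> A0" using P1p(5) A0 by blast
    obtain x1 where x1: "x1 \<in> A1" using P1p(5) A1 by blast
    have x01: "x1 \<noteq> x0" using P1p(4)[rule_format, OF A0 A1(1)] A1(2) x0 x1 by auto
    have x0V: "x0 \<in> V" "x1 \<in> V" using P1p(1) A0 A1 x0 x1 by auto
    obtain a C where aC: "a \<in> V" "C \<noteq> {}" "C \<subseteq> V - {a}" "\<forall>v\<in>C. induces_connected E (V - {v})"
      "\<forall>v\<in>C. \<forall>w. E v w \<longrightarrow> w \<in> C \<or> w = a"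
      using min_comp[OF G connV x0V(1) x0V(2) x01] by blast
    have finC: "finite C" using aC(3) finV by (meson finite_Diff finite_subset)
    obtain v where v: "v \<in> C" "card (chl E P1 v) + card (chl E P2 v) \<le> 4"
      using choose_v[OF G Suc.prems(3) Suc.prems(4) finC aC(2) aC(5)] by blast
    have vV: "v \<in> V" using v(1) aC(3) by auto
    have connv: "induces_connected E (V - {v})" using aC(4) v(1) by blast
    obtain Q1 where Q1: "{v} \<in> Q1" "reach V E (Suc k) P1 Q1 (1 + card (chl E P1 v))"
      using to_singleton[OF G connv k2 Suc.prems(3) vV] by blast
    obtain Q2 where Q2: "{v} \<in> Q2" "reach V E (Suc k) P2 Q2 (1 + card (chl E P2 v))"
      using to_singleton[OF G connv k2 Suc.prems(4) vV] by blast
    have "Q1 \<in> Part V E (Suc k)" "Q2 \<in> Part V E (Suc k)" using Q1(2) Q2(2)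
      unfolding reach_def path_in_def by (metis last_in_set subset_iff)+
    then have R1: "Q1 - {{v}} \<in> Part (V - {v}) (delv E v) k"
      and R2: "Q2 - {{v}} \<in> Part (V - {v}) (delv E v) k"
      using Part_remove Q1(1) Q2(1) by (metis diff_Suc_1)+
    have cg: "connected_graph (V - {v}) (delv E v)"
      unfolding connected_graph_def graph_def
    proof (intro conjI allI impI)
      show "finite (V - {v})" using finV by simp
      fix x y assume "delv E v x y"
      then show "x \<in> V - {v}" "y \<in> V - {v}" "delv E v y x" using edges sym unfolding delv_def by auto
    next
      fix x show "\<not> delv E v x x" using irr unfolding delv_def by simp
    next
      show "induces_connected (delv E v) (V - {v})" using ic_restrict[of v "V - {v}" E] connv by simp
    qed
    have k1: "k \<ge> 1" using False by simp
    have "reach (V - {v}) (delv E v) k (Q1 - {{v}}) (Q2 - {{v}}) (6 * (k - 1))"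
      by (rule Suc.IH[OF k1 cg R1 R2])
    then have "reach V E (Suc k) (insert {v} (Q1 - {{v}})) (insert {v} (Q2 - {{v}})) (6 * (k - 1))"
      by (rule reach_lift[OF _ vV])
    then have mid: "reach V E (Suc k) Q1 Q2 (6 * (k - 1))" using Q1(1) Q2(1) by (simp add: insert_absorb)
    have "reach V E (Suc k) P1 P2 ((1 + card (chl E P1 v)) + 6 * (k - 1) + (1 + card (chl E P2 v)))"
      using reach_trans[OF reach_trans[OF Q1(2) mid] reach_sym[OF Q2(2)]] .
    moreover have "(1 + card (chl E P1 v)) + 6 * (k - 1) + (1 + card (chl E P2 v)) \<le> 6 * (Suc k - 1)"
      using v(2) k1 by simp
    ultimately show ?thesis by (rule reach_mono)
  qed
qed

lemma path_rtrancl: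
  "xs \<noteq> [] \<Longrightarrow> set xs \<subseteq> Part V E k \<Longrightarrow> successively recom_move xs
   \<Longrightarrow> (R_inf V E k)\<^sup>*\<^sup>* (hd xs) (last xs)"
proof (induction xs)
  case Nil then show ?case by simp
next
  case (Cons x xs)
  show ?case
  proof (cases xs)
    case Nil then show ?thesis by simp
  next
    case (Cons y ys)
    have "recom_move x y" "successively recom_move xs" using Cons.prems(3) Cons by simp_all
    moreover have "x \<in> Part V E k" "y \<in> Part V E k" using Cons.prems(2) Cons by simp_all
    ultimately have "R_inf V E k x y" unfolding R_inf_def by simp
    moreover have "(R_inf V E k)\<^sup>*\<^sup>* (hd xs) (last xs)"
      using Cons.IH Cons.prems(2) \<open>successively recom_move xs\<close> Cons by simp
    ultimately show ?thesis using Cons by (simp add: converse_rtranclp_into_rtranclp)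
  qed
qed

theorem mainTheorem3:
  fixes V :: "'a set" and E :: "'a \<Rightarrow> 'a \<Rightarrow> bool" and k :: nat
  assumes "connected_graph V E" and "k \<ge> 1"
  shows "(\<forall>P1\<in>Part V E k. \<forall>P2\<in>Part V E k.
           \<exists>xs. xs \<noteq> [] \<and> hd xs = P1 \<and> last xs = P2 \<and> set xs \<subseteq> Part V E k
              \<and> length xs - 1 \<le> 6 * (k - 1)
              \<and> (\<forall>i. i + 1 < length xs \<longrightarrow> recom_move (xs ! i) (xs ! (i + 1))))
         \<and> R_inf_connected V E k"
proof -
  have m: "reach V E k P1 P2 (6 * (k - 1))" if "P1 \<in> Part V E k" "P2 \<in> Part V E k" for P1 P2
    using main[OF assms(2) assms(1) that] .
  have A: "\<forall>P1\<in>Part V E k. \<forall>P2\<in>Part V E k.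
           \<exists>xs. xs \<noteq> [] \<and> hd xs = P1 \<and> last xs = P2 \<and> set xs \<subseteq> Part V E k
              \<and> length xs - 1 \<le> 6 * (k - 1)
              \<and> (\<forall>i. i + 1 < length xs \<longrightarrow> recom_move (xs ! i) (xs ! (i + 1)))"
  proof (intro ballI)
    fix P1 P2 assume P: "P1 \<in> Part V E k" "P2 \<in> Part V E k"
    obtain xs where xs: "path_in V E k xs" "hd xs = P1" "last xs = P2" "length xs \<le> Suc (6 * (k - 1))"
      using m[OF P] unfolding reach_def by blast
    have s: "successively recom_move xs" "xs \<noteq> []" "set xs \<subseteq> Part V E k"
      using xs(1) unfolding path_in_def by auto
    have "\<forall>i. i + 1 < length xs \<longrightarrow> recom_move (xs ! i) (xs ! (i + 1))"
      using successively_nth[OF s(1)] by simp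
    then show "\<exists>xs. xs \<noteq> [] \<and> hd xs = P1 \<and> last xs = P2 \<and> set xs \<subseteq> Part V E k
              \<and> length xs - 1 \<le> 6 * (k - 1)
              \<and> (\<forall>i. i + 1 < length xs \<longrightarrow> recom_move (xs ! i) (xs ! (i + 1)))"
      using s xs by (intro exI[of _ xs]) auto
  qed
  have B: "R_inf_connected V E k"
    unfolding R_inf_connected_def
  proof (intro ballI)
    fix P1 P2 assume P: "P1 \<in> Part V E k" "P2 \<in> Part V E k"
    obtain xs where xs: "path_in V E k xs" "hd xs = P1" "last xs = P2"
      using m[OF P] unfolding reach_def by blast
    then show "(R_inf V E k)\<^sup>*\<^sup>* P1 P2" using path_rtrancl[of xs V E k] unfolding path_in_def by auto
  qed
  show ?thesis using A B by simp
qed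

end
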